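(* Let $(X,\mu)$ be a measure space, $\mathcal H=L^2(X,\mu)$ the real Hilbert space with inner product $\langle\cdot,\cdot\rangle$, and $\hat H\colon \operatorname{dom}(\hat H)\subset\mathcal H\to\mathcal H$ a densely defined self-adjoint linear operator. Let $\theta\mapsto\psi_\theta\in\operatorname{dom}(\hat H)\setminus\{0\}$, $\theta\in\mathbb R^P$, be a sufficiently regular family of real-valued wavefunctions with $\psi_\theta(x)\neq 0$ for $\mu$-a.e. $x$ (regular enough that all expressions below are well defined, $\partial_{\theta_j}\psi_\theta\in\operatorname{dom}(\hat H)$ with $\hat H\partial_{\theta_j}\psi_\theta=\partial_{\theta_j}(\hat H\psi_\theta)$, and differentiation under the integral sign is permitted). Set $\hat\psi_\theta=\psi_\theta/\|\psi_\theta\|$ and define \[ H(\theta)_{ij}=\langle \partial_{\theta_i}\hat\psi_\theta,\hat H\,\partial_{\theta_j}\hat\psi_\theta\rangle,\qquad i,j=1,\dots,P. \] Let $p_\theta=\psi_\theta^2/\|\psi_\theta\|^2$ be the Born density and write $\langle f\rangle=\int_X f\,p_\theta\,d\mu$. Let $E_L=\hat H\psi_\theta/\psi_\theta$ be the local energy and $E_{L,j}=\partial_{\theta_j}E_L$. Then for all $i,j$, \[ H(\theta)_{ij}=\Big\langle \Big[E_{L,j}+E_L\big(\partial_{\theta_j}\log|\psi_\theta|-\langle\partial_{\theta_j}\log|\psi_\theta|\rangle\big)\Big]\cdot\Big[\partial_{\theta_i}\log|\psi_\theta|-\langle\partial_{\theta_i}\log|\psi_\theta|\rangle\Big]\Big\rangle.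 \]
   Context: All wavefunctions are real. $\|\cdot\|$ is the norm induced by $\langle\cdot,\cdot\rangle$. *)

theory Defs
  imports "HOL-Analysis.Analysis"
begin

definition L2 :: "'a measure \<Rightarrow> ('a \<Rightarrow> real) set" where
  "L2 M = {f. f \<in> borel_measurable M \<and> integrable M (\<lambda>x. (f x)\<^sup>2)}"

definition l2_inner :: "'a measure \<Rightarrow> ('a \<Rightarrow> real) \<Rightarrow> ('a \<Rightarrow> real) \<Rightarrow> real" where
  "l2_inner M f g = (\<integral>x. f x * g x \<partial>M)"

definition l2_norm :: "'a measure \<Rightarrow> ('a \<Rightarrow> real) \<Rightarrow> real" where
  "l2_norm M f = sqrt (\<integral>x. (f x)\<^sup>2 \<partial>M)"

text \<open>A linear operator on L^2 given on representatives: domain D is a linear subspace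
  of L^2 closed under a.e. equality, the operator maps into L^2, is well defined
  modulo a.e. equality, and is linear (modulo a.e. equality).\<close>
definition L2_linear_operator ::
  "'a measure \<Rightarrow> ('a \<Rightarrow> real) set \<Rightarrow> (('a \<Rightarrow> real) \<Rightarrow> ('a \<Rightarrow> real)) \<Rightarrow> bool" where
  "L2_linear_operator M D Hop \<longleftrightarrow>
     D \<subseteq> L2 M \<and> (\<forall>f\<in>D. Hop f \<in> L2 M) \<and>
     (\<forall>f\<in>D. \<forall>g\<in>L2 M. (AE x in M. f x = g x) \<longrightarrow> g \<in> D \<and> (AE x in M. Hop f x = Hop g x)) \<and>
     (\<forall>f\<in>D. \<forall>g\<in>D. \<forall>a b::real. (\<lambda>x. a * f x + b * g x) \<in> D \<and>
        (AE x in M. Hop (\<lambda>y. a * f y + b * g y) x = a * Hop f x + b * Hop g x))"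

definition densely_defined :: "'a measure \<Rightarrow> ('a \<Rightarrow> real) set \<Rightarrow> bool" where
  "densely_defined M D \<longleftrightarrow>
     (\<forall>f\<in>L2 M. \<forall>e>0. \<exists>g\<in>D. l2_norm M (\<lambda>x. f x - g x) < e)"

text \<open>Self-adjoint: symmetric (D \<subseteq> dom H*, H* = H on D) and dom H* \<subseteq> D.\<close>
definition self_adjoint ::
  "'a measure \<Rightarrow> ('a \<Rightarrow> real) set \<Rightarrow> (('a \<Rightarrow> real) \<Rightarrow> ('a \<Rightarrow> real)) \<Rightarrow> bool" where
  "self_adjoint M D Hop \<longleftrightarrow>
     (\<forall>f\<in>D. \<forall>g\<in>D. l2_inner M (Hop f) g = l2_inner M f (Hop g)) \<and>
     (\<forall>g\<in>L2 M. \<forall>h\<in>L2 M. (\<forall>f\<in>D. l2_inner M (Hop f) g = l2_inner M f h)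
        \<longrightarrow> g \<in> D \<and> (AE x in M. Hop g x = h x))"

definition pd :: "(real^'p \<Rightarrow> real) \<Rightarrow> real^'p \<Rightarrow> 'p \<Rightarrow> real" where
  "pd f \<theta> j = deriv (\<lambda>t. f (\<theta> + t *\<^sub>R axis j 1)) 0"

definition has_pd :: "(real^'p \<Rightarrow> real) \<Rightarrow> real^'p \<Rightarrow> 'p \<Rightarrow> real \<Rightarrow> bool" where
  "has_pd f \<theta> j D \<longleftrightarrow> ((\<lambda>t. f (\<theta> + t *\<^sub>R axis j 1)) has_real_derivative D) (at 0)"

definition psi_hat :: "'a measure \<Rightarrow> (real^'p \<Rightarrow> 'a \<Rightarrow> real) \<Rightarrow> real^'p \<Rightarrow> 'a \<Rightarrow> real" where
  "psi_hat M \<psi> \<theta> x = \<psi> \<theta> x / l2_norm M (\<psi> \<theta>)"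

definition Hmat ::
  "'a measure \<Rightarrow> (('a \<Rightarrow> real) \<Rightarrow> ('a \<Rightarrow> real)) \<Rightarrow> (real^'p \<Rightarrow> 'a \<Rightarrow> real) \<Rightarrow> real^'p \<Rightarrow> 'p \<Rightarrow> 'p \<Rightarrow> real" where
  "Hmat M Hop \<psi> \<theta> i j =
     l2_inner M (\<lambda>x. pd (\<lambda>\<theta>'. psi_hat M \<psi> \<theta>' x) \<theta> i)
                (Hop (\<lambda>x. pd (\<lambda>\<theta>'. psi_hat M \<psi> \<theta>' x) \<theta> j))"

definition born :: "'a measure \<Rightarrow> (real^'p \<Rightarrow> 'a \<Rightarrow> real) \<Rightarrow> real^'p \<Rightarrow> 'a \<Rightarrow> real" where
  "born M \<psi> \<theta> x = (\<psi> \<theta> x)\<^sup>2 / (l2_norm M (\<psi> \<theta>))\<^sup>2"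

definition born_exp :: "'a measure \<Rightarrow> (real^'p \<Rightarrow> 'a \<Rightarrow> real) \<Rightarrow> real^'p \<Rightarrow> ('a \<Rightarrow> real) \<Rightarrow> real" where
  "born_exp M \<psi> \<theta> f = (\<integral>x. f x * born M \<psi> \<theta> x \<partial>M)"

definition local_energy ::
  "(('a \<Rightarrow> real) \<Rightarrow> ('a \<Rightarrow> real)) \<Rightarrow> (real^'p \<Rightarrow> 'a \<Rightarrow> real) \<Rightarrow> real^'p \<Rightarrow> 'a \<Rightarrow> real" where
  "local_energy Hop \<psi> \<theta> x = Hop (\<psi> \<theta>) x / \<psi> \<theta> x"

definition local_energy_d ::
  "(('a \<Rightarrow> real) \<Rightarrow> ('a \<Rightarrow> real)) \<Rightarrow> (real^'p \<Rightarrow> 'a \<Rightarrow> real) \<Rightarrow> real^'p \<Rightarrow> 'p \<Rightarrow> 'a \<Rightarrow> real" where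
  "local_energy_d Hop \<psi> \<theta> j x = pd (\<lambda>\<theta>'. local_energy Hop \<psi> \<theta>' x) \<theta> j"

definition dlog :: "(real^'p \<Rightarrow> 'a \<Rightarrow> real) \<Rightarrow> real^'p \<Rightarrow> 'p \<Rightarrow> 'a \<Rightarrow> real" where
  "dlog \<psi> \<theta> j x = pd (\<lambda>\<theta>'. ln \<bar>\<psi> \<theta>' x\<bar>) \<theta> j"

end

theory Submission imports Defs begin

lemma ln_abs_eq: "ln \<bar>y::real\<bar> = ln (y^2) / 2"
proof (cases "y = 0")
  case True then show ?thesis by simp
next
  case False
  have "ln (y^2) = ln (\<bar>y\<bar> * \<bar>y\<bar>)" by (simp add: power2_eq_square abs_mult[symmetric])
  also have "\<dots> = ln \<bar>y\<bar> + ln \<bar>y\<bar>" using False by (metis ln_mult_pos zero_less_abs_iff)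
  finally show ?thesis by simp
qed

lemma DERIV_ln_abs: "(y::real) \<noteq> 0 \<Longrightarrow> ((\<lambda>y. ln \<bar>y\<bar>) has_real_derivative 1 / y) (at y)"
proof -
  assume y: "y \<noteq> 0"
  have "((\<lambda>y. ln (y^2) / 2) has_real_derivative (1/(y^2) * (2 * y)) / 2) (at y)"
    apply (intro derivative_eq_intros DERIV_chain2[OF DERIV_ln_divide])
    using y by auto
  moreover have "(1/(y^2) * (2 * y)) / 2 = 1 / y" using y by (simp add: power2_eq_square field_simps)
  ultimately show ?thesis by (simp add: ln_abs_eq)
qed

lemma pd_eq: "has_pd f \<theta> k d \<Longrightarrow> pd f \<theta> k = d"
  unfolding has_pd_def pd_def by (rule DERIV_imp_deriv)

lemma has_pd_ex: "\<exists>d. has_pd f \<theta> k d \<Longrightarrow> has_pd f \<theta> k (pd f \<theta> k)"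
  using pd_eq by metis

lemma has_pd_chain: "has_pd f \<theta> k a \<Longrightarrow> (h has_real_derivative b) (at (f \<theta>)) \<Longrightarrow>
   has_pd (\<lambda>t. h (f t)) \<theta> k (b * a)"
  unfolding has_pd_def
  by (rule DERIV_chain2[where f=h]) auto

lemma has_pd_div: "has_pd f \<theta> k a \<Longrightarrow> has_pd g \<theta> k b \<Longrightarrow> g \<theta> \<noteq> 0 \<Longrightarrow>
   has_pd (\<lambda>t. f t / g t) \<theta> k ((a * g \<theta> - f \<theta> * b) / (g \<theta> * g \<theta>))"
  unfolding has_pd_def
  by (drule (1) DERIV_divide) auto

lemma alg: "(p::real) \<noteq> 0 \<Longrightarrow> N > 0 \<Longrightarrow> G = (1/N)*h + (-cj/N)*E \<Longrightarrow>
  ((1/N)*a + (-ci/N)*p) * G = ((h*p - E*b)/(p*p) + E/p*(b/p - cj)) * (a/p - ci) * (p\<^sup>2/N\<^sup>2)"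
proof -
  assume p: "p \<noteq> 0" and N: "N > 0" and G: "G = (1/N)*h + (-cj/N)*E"
  have h: "h = N * G + cj * E" using G N by (simp add: field_simps)
  show ?thesis unfolding h using p N by (simp add: field_simps power2_eq_square)
qed

theorem mainTheorem1:
  fixes M :: "'a measure"
    and D :: "('a \<Rightarrow> real) set"
    and Hop :: "('a \<Rightarrow> real) \<Rightarrow> ('a \<Rightarrow> real)"
    and \<psi> :: "real^'p \<Rightarrow> 'a \<Rightarrow> real"
    and \<theta> :: "real^'p" and i j :: 'p
  assumes op: "L2_linear_operator M D Hop"
    and dense: "densely_defined M D"
    and sa: "self_adjoint M D Hop"
    and psi_dom: "\<And>\<theta>. \<psi> \<theta> \<in> D"
    and psi_nonzero: "\<And>\<theta>. l2_norm M (\<psi> \<theta>) \<noteq> 0"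
    and psi_ae_nonzero: "\<And>\<theta>. AE x in M. \<psi> \<theta> x \<noteq> 0"
    and psi_diff: "\<And>\<theta> k x. \<exists>d. has_pd (\<lambda>\<theta>'. \<psi> \<theta>' x) \<theta> k d"
    and Hpsi_diff: "\<And>\<theta> k x. \<exists>d. has_pd (\<lambda>\<theta>'. Hop (\<psi> \<theta>') x) \<theta> k d"
    and dpsi_dom: "\<And>\<theta> k. (\<lambda>x. pd (\<lambda>\<theta>'. \<psi> \<theta>' x) \<theta> k) \<in> D"
    and H_commute: "\<And>\<theta> k. AE x in M.
           Hop (\<lambda>y. pd (\<lambda>\<theta>'. \<psi> \<theta>' y) \<theta> k) x = pd (\<lambda>\<theta>'. Hop (\<psi> \<theta>') x) \<theta> k"
    and diff_under_integral: "\<And>\<theta> k. has_pd (\<lambda>\<theta>'. \<integral>x. (\<psi> \<theta>' x)\<^sup>2 \<partial>M) \<theta> k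
           (\<integral>x. 2 * \<psi> \<theta> x * pd (\<lambda>\<theta>'. \<psi> \<theta>' x) \<theta> k \<partial>M)"
    and dlog_meas: "\<And>\<theta> k. dlog \<psi> \<theta> k \<in> borel_measurable M"
    and ELd_meas: "\<And>\<theta> k. local_energy_d Hop \<psi> \<theta> k \<in> borel_measurable M"
  shows "Hmat M Hop \<psi> \<theta> i j =
           born_exp M \<psi> \<theta> (\<lambda>x.
             (local_energy_d Hop \<psi> \<theta> j x
               + local_energy Hop \<psi> \<theta> x * (dlog \<psi> \<theta> j x - born_exp M \<psi> \<theta> (dlog \<psi> \<theta> j)))
             * (dlog \<psi> \<theta> i x - born_exp M \<psi> \<theta> (dlog \<psi> \<theta> i)))"
proof -
  define N where "N = l2_norm M (\<psi> \<theta>)"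
  define I where "I = (\<lambda>\<theta>'. \<integral>x. (\<psi> \<theta>' x)\<^sup>2 \<partial>M)"
  define \<psi>k where "\<psi>k = (\<lambda>k x. pd (\<lambda>\<theta>'. \<psi> \<theta>' x) \<theta> k)"
  define c where "c = (\<lambda>k. (\<integral>x. \<psi> \<theta> x * \<psi>k k x \<partial>M) / N\<^sup>2)"
  define H\<psi>k where "H\<psi>k = (\<lambda>k x. pd (\<lambda>\<theta>'. Hop (\<psi> \<theta>') x) \<theta> k)"
  have DL2: "D \<subseteq> L2 M" and HL2: "\<And>f. f \<in> D \<Longrightarrow> Hop f \<in> L2 M"
    and lin: "\<And>f g a b. f \<in> D \<Longrightarrow> g \<in> D \<Longrightarrow> (\<lambda>x. a * f x + b * g x) \<in> D \<and>
        (AE x in M. Hop (\<lambda>y. a * f y + b * g y) x = a * Hop f x + b * Hop g x)"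
    using op unfolding L2_linear_operator_def by blast+
  have measD: "\<And>f. f \<in> D \<Longrightarrow> f \<in> borel_measurable M" using DL2 unfolding L2_def by blast
  have measH: "\<And>f. f \<in> D \<Longrightarrow> Hop f \<in> borel_measurable M" using HL2 unfolding L2_def by blast
  have m_psi[measurable]: "\<psi> \<theta> \<in> borel_measurable M" using measD psi_dom by blast
  have m_Hpsi[measurable]: "Hop (\<psi> \<theta>) \<in> borel_measurable M" using measH psi_dom by blast
  have m_psik[measurable]: "\<And>k. \<psi>k k \<in> borel_measurable M" unfolding \<psi>k_def using measD dpsi_dom by blast
  have m_dlog[measurable]: "\<And>k. dlog \<psi> \<theta> k \<in> borel_measurable M" by (rule dlog_meas)
  have m_ELd[measurable]: "\<And>k. local_energy_d Hop \<psi> \<theta> k \<in> borel_measurable M" by (rule ELd_meas)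
  have Ipos: "I \<theta> > 0"
  proof -
    have "I \<theta> \<ge> 0" unfolding I_def by (rule integral_nonneg_AE) auto
    moreover have "I \<theta> \<noteq> 0" using psi_nonzero[of \<theta>] unfolding I_def l2_norm_def by auto
    ultimately show ?thesis by simp
  qed
  have N_eq: "N = sqrt (I \<theta>)" unfolding N_def I_def l2_norm_def ..
  have Npos: "N > 0" using Ipos N_eq by simp
  have Nd: "has_pd (\<lambda>\<theta>'. l2_norm M (\<psi> \<theta>')) \<theta> k ((\<integral>x. \<psi> \<theta> x * \<psi>k k x \<partial>M) / N)" for k
  proof -
    have 1: "has_pd I \<theta> k (2 * (\<integral>x. \<psi> \<theta> x * \<psi>k k x \<partial>M))"
      using diff_under_integral[of \<theta> k] unfolding I_def \<psi>k_def
      by (simp add: mult.assoc)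
    have "has_pd (\<lambda>t. sqrt (I t)) \<theta> k (inverse (sqrt (I \<theta>)) / 2 * (2 * (\<integral>x. \<psi> \<theta> x * \<psi>k k x \<partial>M)))"
      by (rule has_pd_chain[OF 1 DERIV_real_sqrt[OF Ipos]])
    moreover have "(\<lambda>t. sqrt (I t)) = (\<lambda>\<theta>'. l2_norm M (\<psi> \<theta>'))" unfolding I_def l2_norm_def ..
    ultimately show ?thesis using N_eq by (simp add: field_simps)
  qed
  have psid: "has_pd (\<lambda>\<theta>'. \<psi> \<theta>' x) \<theta> k (\<psi>k k x)" for k x
    unfolding \<psi>k_def by (rule has_pd_ex[OF psi_diff])
  have Hpsid: "has_pd (\<lambda>\<theta>'. Hop (\<psi> \<theta>') x) \<theta> k (H\<psi>k k x)" for k x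
    unfolding H\<psi>k_def by (rule has_pd_ex[OF Hpsi_diff])
  have g_eq: "(\<lambda>x. pd (\<lambda>\<theta>'. psi_hat M \<psi> \<theta>' x) \<theta> k) = (\<lambda>x. (1/N) * \<psi>k k x + (- c k / N) * \<psi> \<theta> x)" for k
  proof
    fix x
    have "has_pd (\<lambda>\<theta>'. \<psi> \<theta>' x / l2_norm M (\<psi> \<theta>')) \<theta> k
       ((\<psi>k k x * l2_norm M (\<psi> \<theta>) - \<psi> \<theta> x * ((\<integral>x. \<psi> \<theta> x * \<psi>k k x \<partial>M) / N)) / (l2_norm M (\<psi> \<theta>) * l2_norm M (\<psi> \<theta>)))"
      by (rule has_pd_div[OF psid Nd psi_nonzero])
    hence "pd (\<lambda>\<theta>'. psi_hat M \<psi> \<theta>' x) \<theta> k = 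
       ((\<psi>k k x * N - \<psi> \<theta> x * ((\<integral>x. \<psi> \<theta> x * \<psi>k k x \<partial>M) / N)) / (N * N))"
      unfolding psi_hat_def N_def by (rule pd_eq)
    also have "\<dots> = (1/N) * \<psi>k k x + (- c k / N) * \<psi> \<theta> x"
      unfolding c_def using Npos by (simp add: field_simps power2_eq_square)
    finally show "pd (\<lambda>\<theta>'. psi_hat M \<psi> \<theta>' x) \<theta> k = (1/N) * \<psi>k k x + (- c k / N) * \<psi> \<theta> x" .
  qed
  have gD: "(\<lambda>x. (1/N) * \<psi>k k x + (- c k / N) * \<psi> \<theta> x) \<in> D" for k
    using lin[OF dpsi_dom psi_dom] unfolding \<psi>k_def by blast
  have Hg: "AE x in M. Hop (\<lambda>x. (1/N) * \<psi>k k x + (- c k / N) * \<psi> \<theta> x) x = (1/N) * H\<psi>k k x + (- c k / N) * Hop (\<psi> \<theta>) x" for k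
  proof -
    have "AE x in M. Hop (\<lambda>x. (1/N) * \<psi>k k x + (- c k / N) * \<psi> \<theta> x) x = (1/N) * Hop (\<psi>k k) x + (- c k / N) * Hop (\<psi> \<theta>) x"
      using lin[OF dpsi_dom psi_dom] unfolding \<psi>k_def by blast
    moreover have "AE x in M. Hop (\<psi>k k) x = H\<psi>k k x" using H_commute unfolding \<psi>k_def H\<psi>k_def by blast
    ultimately show ?thesis by eventually_elim simp
  qed
  have m_Hg[measurable]: "Hop (\<lambda>x. (1/N) * \<psi>k k x + (- c k / N) * \<psi> \<theta> x) \<in> borel_measurable M" for k
    using measH[OF gD] .
  have dlog_eq: "dlog \<psi> \<theta> k x = \<psi>k k x / \<psi> \<theta> x" if "\<psi> \<theta> x \<noteq> 0" for k x
  proof -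
    have "has_pd (\<lambda>\<theta>'. ln \<bar>\<psi> \<theta>' x\<bar>) \<theta> k (1 / \<psi> \<theta> x * \<psi>k k x)"
      by (rule has_pd_chain[OF psid DERIV_ln_abs[OF that]])
    thus ?thesis unfolding dlog_def by (simp add: pd_eq)
  qed
  have ELd_eq: "local_energy_d Hop \<psi> \<theta> k x = (H\<psi>k k x * \<psi> \<theta> x - Hop (\<psi> \<theta>) x * \<psi>k k x) / (\<psi> \<theta> x * \<psi> \<theta> x)"
    if "\<psi> \<theta> x \<noteq> 0" for k x
    unfolding local_energy_d_def local_energy_def
    by (rule pd_eq, rule has_pd_div[OF Hpsid psid that])
  have bexp: "born_exp M \<psi> \<theta> (dlog \<psi> \<theta> k) = c k" for k
  proof -
    have "born_exp M \<psi> \<theta> (dlog \<psi> \<theta> k) = (\<integral>x. \<psi> \<theta> x * \<psi>k k x / N\<^sup>2 \<partial>M)"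
      unfolding born_exp_def born_def N_def[symmetric]
    proof (rule integral_cong_AE)
      show "AE x in M. dlog \<psi> \<theta> k x * ((\<psi> \<theta> x)\<^sup>2 / N\<^sup>2) = \<psi> \<theta> x * \<psi>k k x / N\<^sup>2"
        using psi_ae_nonzero[of \<theta>] by eventually_elim (simp add: dlog_eq power2_eq_square)
    qed measurable
    also have "\<dots> = c k" unfolding c_def by simp
    finally show ?thesis .
  qed
  have "Hmat M Hop \<psi> \<theta> i j = (\<integral>x. ((1/N) * \<psi>k i x + (- c i / N) * \<psi> \<theta> x) *
       Hop (\<lambda>x. (1/N) * \<psi>k j x + (- c j / N) * \<psi> \<theta> x) x \<partial>M)"
    unfolding Hmat_def l2_inner_def g_eq ..
  also have "\<dots> = born_exp M \<psi> \<theta> (\<lambda>x.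
             (local_energy_d Hop \<psi> \<theta> j x
               + local_energy Hop \<psi> \<theta> x * (dlog \<psi> \<theta> j x - born_exp M \<psi> \<theta> (dlog \<psi> \<theta> j)))
             * (dlog \<psi> \<theta> i x - born_exp M \<psi> \<theta> (dlog \<psi> \<theta> i)))"
    unfolding born_exp_def[of M \<psi> \<theta> "\<lambda>x. _ x * _ x"] bexp born_def N_def[symmetric] local_energy_def
  proof (rule integral_cong_AE)
    show "AE x in M. ((1/N) * \<psi>k i x + (- c i / N) * \<psi> \<theta> x) * Hop (\<lambda>x. (1/N) * \<psi>k j x + (- c j / N) * \<psi> \<theta> x) x =
      (local_energy_d Hop \<psi> \<theta> j x + Hop (\<psi> \<theta>) x / \<psi> \<theta> x * (dlog \<psi> \<theta> j x - c j)) * (dlog \<psi> \<theta> i x - c i) * ((\<psi> \<theta> x)\<^sup>2 / N\<^sup>2)"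
      using psi_ae_nonzero[of \<theta>] Hg[of j]
    proof eventually_elim
      case (elim x)
      show ?case unfolding dlog_eq[OF elim(1)] ELd_eq[OF elim(1)]
        by (rule alg[OF elim(1) Npos elim(2)])
    qed
  qed measurable
  finally show ?thesis .
qed

end
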